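(* Let $D=[0,x_0]\times[0,y_0]$, let $\varphi:D\to\mathbb{R}$ be a smooth solution of $\varphi_{xy}=\sin\varphi$, and let $\mathcal{U}(x,y,\lambda)$ be its extended normalized frame, i.e. the solution of $$\partial_x\mathcal{U}=\mathcal{U}\,\frac{i}{2}\begin{pmatrix}\varphi_x&-\lambda\\-\lambda&-\varphi_x\end{pmatrix},\qquad \partial_y\mathcal{U}=\mathcal{U}\,\frac{i}{2}\lambda^{-1}\begin{pmatrix}0&e^{-i\varphi}\\ e^{i\varphi}&0\end{pmatrix},\qquad \mathcal{U}(0,0,\lambda)=I.$$ Let $\theta:D\to\mathbb{R}$ be smooth, let $\mathcal{R}(x,y)=\exp\!\big(\tfrac{i}{2}\theta(x,y)\sigma_3\big)$ be the ($\lambda$-independent) $\mathrm{SU}(2)$-matrix of the rotation by angle $\theta(x,y)$ about $e_3$, let $\mathcal{R}_0:=\mathcal{R}(0,0)$, and define the gauged frame $\hat{\mathcal{U}}:=\mathcal{R}_0^{-1}\,\mathcal{U}\,\mathcal{R}$. Suppose that at a point $(x,y)$ of an open set $\Omega\subset D$, both $\mathcal{U}$ and $\hat{\mathcal{U}}$ admit Birkhoff factorizations $$\mathcal{U}=\mathcal{U}_+V_-=\mathcal{U}_-V_+,\qquad \hat{\mathcal{U}}=\hat{\mathcal{U}}_+\hat V_-=\hat{\mathcal{U}}_-\hat V_+,$$ with $\mathcal{U}_+,\hat{\mathcal{U}}_+\in\Lambda^+_*\mathrm{SU}(2)$, $V_-,\hat V_-\in\Lambda^-\mathrm{SU}(2)$,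 $\mathcal{U}_-,\hat{\mathcal{U}}_-\in\Lambda^-_*\mathrm{SU}(2)$, $V_+,\hat V_+\in\Lambda^+\mathrm{SU}(2)$, for all $(x,y)\in\Omega$. Define the potentials on $\Omega$ by $$\eta^x:=-\lambda^{-1}\,\mathcal{U}_+^{-1}\partial_x\mathcal{U}_+,\quad \eta^y:=-\lambda\,\mathcal{U}_-^{-1}\partial_y\mathcal{U}_-,\quad \hat\eta^x:=-\lambda^{-1}\,\hat{\mathcal{U}}_+^{-1}\partial_x\hat{\mathcal{U}}_+,\quad \hat\eta^y:=-\lambda\,\hat{\mathcal{U}}_-^{-1}\partial_y\hat{\mathcal{U}}_-.$$ Then on $\Omega$ $$\hat\eta^x=\mathcal{R}_0^{-1}\,\eta^x\,\mathcal{R}_0,\qquad \hat\eta^y=\mathcal{R}_0^{-1}\,\eta^y\,\mathcal{R}_0.$$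
   Context: $I$ is the $2\times2$ identity and $\sigma_3=\mathrm{diag}(1,-1)$. The frame $\mathcal{U}(x,y,\lambda)$ is defined for $\lambda\in\mathbb{C}\setminus\{0\}$, is holomorphic in $\lambda$, is $\mathrm{SU}(2)$-valued for real $\lambda\neq 0$, and satisfies $\sigma_3\mathcal{U}(x,y,\lambda)\sigma_3=\mathcal{U}(x,y,-\lambda)$. Twisted loops: a loop is a map $g(\lambda)=\sum_{k\in\mathbb{Z}}g_k\lambda^k$ (Laurent series with $2\times2$ complex matrix coefficients converging on $\mathbb{C}\setminus\{0\}$) with $g(\lambda)\in\mathrm{SU}(2)$ for real $\lambda\ne0$ and $\sigma_3g(\lambda)\sigma_3=g(-\lambda)$. $\Lambda^+\mathrm{SU}(2)$: loops with $g_k=0$ for $k<0$; $\Lambda^+_*\mathrm{SU}(2)$: those in $\Lambda^+\mathrm{SU}(2)$ with $g_0=I$. $\Lambda^-\mathrm{SU}(2)$: loops with $g_k=0$ for $k>0$; $\Lambda^-_*\mathrm{SU}(2)$: those in $\Lambda^-\mathrm{SU}(2)$ with $g_0=I$. All factors are regarded as smooth functions of $(x,y)\in\Omega$ (and $\lambda$). *)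

theory Defs
  imports "HOL-Analysis.Analysis"
begin

type_synonym cmat = "complex^2^2"

definition mat2 :: "complex \<Rightarrow> complex \<Rightarrow> complex \<Rightarrow> complex \<Rightarrow> cmat" where
  "mat2 a b c d = (\<chi> i j. if i = 1 then (if j = 1 then a else b) else (if j = 1 then c else d))"

definition cscale :: "complex \<Rightarrow> cmat \<Rightarrow> cmat" where
  "cscale c M = (\<chi> i j. c * M $ i $ j)"

definition adjoint_mat :: "cmat \<Rightarrow> cmat" where
  "adjoint_mat A = (\<chi> i j. cnj (A $ j $ i))"

definition sigma3 :: cmat where
  "sigma3 = mat2 1 0 0 (-1)"

definition SU2 :: "cmat set" where
  "SU2 = {A. A ** adjoint_mat A = mat 1 \<and> det A = 1}"

text \<open>Rotation by angle t about e3: exp((i/2) t sigma3), written out (diagonal).\<close>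
definition rot :: "real \<Rightarrow> cmat" where
  "rot t = mat2 (exp (\<i> * of_real t / 2)) 0 0 (exp (- \<i> * of_real t / 2))"

definition laurent_coeffs :: "(complex \<Rightarrow> cmat) \<Rightarrow> (int \<Rightarrow> cmat) \<Rightarrow> bool" where
  "laurent_coeffs g c \<longleftrightarrow>
     (\<forall>lam. lam \<noteq> 0 \<longrightarrow> ((\<lambda>k. cscale (lam powi k) (c k)) has_sum g lam) (UNIV :: int set))"

definition twisted_loop :: "(complex \<Rightarrow> cmat) \<Rightarrow> bool" where
  "twisted_loop g \<longleftrightarrow> (\<exists>c. laurent_coeffs g c)
     \<and> (\<forall>t::real. t \<noteq> 0 \<longrightarrow> g (of_real t) \<in> SU2)
     \<and> (\<forall>lam. lam \<noteq> 0 \<longrightarrow> sigma3 ** g lam ** sigma3 = g (- lam))"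

definition loop_plus :: "(complex \<Rightarrow> cmat) \<Rightarrow> bool" where
  "loop_plus g \<longleftrightarrow> twisted_loop g \<and> (\<exists>c. laurent_coeffs g c \<and> (\<forall>k<0. c k = 0))"

definition loop_plus_star :: "(complex \<Rightarrow> cmat) \<Rightarrow> bool" where
  "loop_plus_star g \<longleftrightarrow> twisted_loop g \<and>
     (\<exists>c. laurent_coeffs g c \<and> (\<forall>k<0. c k = 0) \<and> c 0 = mat 1)"

definition loop_minus :: "(complex \<Rightarrow> cmat) \<Rightarrow> bool" where
  "loop_minus g \<longleftrightarrow> twisted_loop g \<and> (\<exists>c. laurent_coeffs g c \<and> (\<forall>k>0. c k = 0))"

definition loop_minus_star :: "(complex \<Rightarrow> cmat) \<Rightarrow> bool" where
  "loop_minus_star g \<longleftrightarrow> twisted_loop g \<and>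
     (\<exists>c. laurent_coeffs g c \<and> (\<forall>k>0. c k = 0) \<and> c 0 = mat 1)"

text \<open>Smoothness (C-infinity) of a function of (x,y) on S: f lies in a family of
  functions closed under taking the two partial derivatives, each member being
  (Frechet) differentiable on S (within S) with those partials.\<close>
definition smooth2_on :: "(real \<times> real) set \<Rightarrow> (real \<times> real \<Rightarrow> 'a::real_normed_vector) \<Rightarrow> bool" where
  "smooth2_on S f \<longleftrightarrow> (\<exists>F. f \<in> F \<and> (\<forall>g\<in>F. \<exists>gx\<in>F. \<exists>gy\<in>F. \<forall>p\<in>S.
      (g has_derivative (\<lambda>h. fst h *\<^sub>R gx p + snd h *\<^sub>R gy p)) (at p within S)))"

definition partial_x :: "(real \<Rightarrow> real \<Rightarrow> complex \<Rightarrow> cmat) \<Rightarrow> real \<Rightarrow> real \<Rightarrow> complex \<Rightarrow> cmat" where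
  "partial_x F x y lam = vector_derivative (\<lambda>s. F s y lam) (at x)"

definition partial_y :: "(real \<Rightarrow> real \<Rightarrow> complex \<Rightarrow> cmat) \<Rightarrow> real \<Rightarrow> real \<Rightarrow> complex \<Rightarrow> cmat" where
  "partial_y F x y lam = vector_derivative (\<lambda>t. F x t lam) (at y)"

end

theory Submission
  imports Defs "HOL-Complex_Analysis.Conformal_Mappings"
begin

no_notation fps_nth (infixl \<open>$\<close> 75)

lemma mm_entry: "((A::cmat) ** B) $ i $ j = A$i$1 * B$1$j + A$i$2 * B$2$j"
  by (simp add: matrix_matrix_mult_def sum_2)

lemma cmat_eq_iff: "(A::cmat) = B \<longleftrightarrow> (A$1$1 = B$1$1 \<and> A$1$2 = B$1$2 \<and> A$2$1 = B$2$1 \<and> A$2$2 = B$2$2)"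
  by (auto simp: vec_eq_iff forall_2)

lemma mat2_entries: "mat2 a b c d $ 1 $ 1 = a" "mat2 a b c d $ 1 $ 2 = b"
  "mat2 a b c d $ 2 $ 1 = c" "mat2 a b c d $ 2 $ 2 = d"
  by (simp_all add: mat2_def)

lemma mat1_entries: "(mat 1::cmat) $ 1 $ 1 = 1" "(mat 1::cmat) $ 1 $ 2 = 0"
  "(mat 1::cmat) $ 2 $ 1 = 0" "(mat 1::cmat) $ 2 $ 2 = 1"
  by (simp_all add: mat_def)

definition adj2 :: "cmat \<Rightarrow> cmat" where
  "adj2 A = mat2 (A$2$2) (- (A$1$2)) (- (A$2$1)) (A$1$1)"

lemma adj2_left: "det (A::cmat) = 1 \<Longrightarrow> adj2 A ** A = mat 1"
  unfolding cmat_eq_iff mm_entry adj2_def mat2_entries mat1_entries det_2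
  by (simp add: algebra_simps)

lemma adj2_right: "det (A::cmat) = 1 \<Longrightarrow> A ** adj2 A = mat 1"
  unfolding cmat_eq_iff mm_entry adj2_def mat2_entries mat1_entries det_2
  by (simp add: algebra_simps)

lemma matrix_inv_eq: assumes "(A::cmat) ** B = mat 1" "B ** A = mat 1" shows "matrix_inv A = B"
proof -
  have ex: "\<exists>B'. A ** B' = mat 1 \<and> B' ** A = mat 1" using assms by blast
  let ?C = "matrix_inv A"
  have C: "A ** ?C = mat 1 \<and> ?C ** A = mat 1"
    unfolding matrix_inv_def by (rule someI_ex[OF ex])
  have "?C = ?C ** (A ** B)" using assms by simp
  also have "\<dots> = (?C ** A) ** B" by (simp add: matrix_mul_assoc)
  also have "\<dots> = B" using C by simp
  finally show ?thesis .
qed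

lemma matrix_inv_det1: "det (A::cmat) = 1 \<Longrightarrow> matrix_inv A = adj2 A"
  by (simp add: matrix_inv_eq adj2_left adj2_right)

lemma rot_inv: "rot a ** rot (-a) = mat 1" "rot (-a) ** rot a = mat 1"
  unfolding cmat_eq_iff mm_entry rot_def mat2_entries mat1_entries
  by (simp_all add: exp_add[symmetric] algebra_simps)

lemma matrix_inv_rot: "matrix_inv (rot a) = rot (-a)"
  by (simp add: matrix_inv_eq rot_inv)

lemma det_rot: "det (rot a) = 1"
  unfolding det_2 rot_def mat2_entries by (simp add: exp_add[symmetric])

lemma cscale_mult_right: "cscale c ((A::cmat) ** B) = A ** cscale c B"
  unfolding cmat_eq_iff mm_entry cscale_def by (simp add: algebra_simps)

lemma cscale_mult_left: "cscale c ((A::cmat) ** B) = cscale c A ** B"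
  unfolding cmat_eq_iff mm_entry cscale_def by (simp add: algebra_simps)


subsection \<open>Scalar Laurent series\<close>

lemma entire_from_balls:
  assumes "\<And>r. f holomorphic_on ball 0 r" shows "f holomorphic_on UNIV"
  unfolding holomorphic_on_def
proof
  fix x :: complex
  have "x \<in> ball 0 (norm x + 1)" by simp
  then have "f field_differentiable at x"
    using holomorphic_on_imp_differentiable_at[OF assms] by blast
  then show "f field_differentiable at x within UNIV" by simp
qed

lemma plus_ext_scalar:
  fixes a :: "int \<Rightarrow> complex"
  assumes hs: "\<And>z. z \<noteq> 0 \<Longrightarrow> ((\<lambda>k. z powi k * a k) has_sum f z) UNIV"
    and neg: "\<And>k. k < 0 \<Longrightarrow> a k = 0"
  shows "\<exists>F. F holomorphic_on UNIV \<and> (\<forall>z. z \<noteq> 0 \<longrightarrow> F z = f z) \<and> F 0 = a 0"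
proof -
  define F where "F z = (\<Sum>n. a (int n) * z ^ n)" for z
  have sm: "(\<lambda>n. a (int n) * z ^ n) sums f z" if "z \<noteq> 0" for z
  proof -
    have "((\<lambda>k. z powi k * a k) has_sum f z) (range int)"
    proof -
      have z: "\<And>k. k \<in> UNIV - range int \<Longrightarrow> z powi k * a k = 0"
      proof -
        fix k :: int assume "k \<in> UNIV - range int"
        then have "k < 0" by (metis Diff_iff nonneg_int_cases not_le range_eqI)
        then show "z powi k * a k = 0" by (simp add: neg)
      qed
      show ?thesis using hs[OF that] has_sum_cong_neutral[of "range int" UNIV
          "\<lambda>k. z powi k * a k" "\<lambda>k. z powi k * a k"] z by auto
    qed
    then have "(((\<lambda>k. z powi k * a k) \<circ> int) has_sum f z) UNIV"
      by (subst (asm) has_sum_reindex) (auto simp: inj_on_def)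
    then show ?thesis
      by (intro has_sum_imp_sums) (simp add: o_def power_int_of_nat mult.commute)
  qed
  have sm0: "(\<lambda>n. a (int n) * 0 ^ n) sums a 0"
    using powser_sums_zero[of "\<lambda>n. a (int n)"] by simp
  have Fe: "(\<lambda>n. a (int n) * z ^ n) sums F z" for z
    using sm sm0 unfolding F_def by (cases "z = 0") (auto simp: sums_iff)
  have "F holomorphic_on UNIV"
    by (rule entire_from_balls, rule power_series_holomorphic[where a="\<lambda>n. a (int n)"]) (use Fe in simp)
  moreover have "\<forall>z. z \<noteq> 0 \<longrightarrow> F z = f z" using sm Fe sums_unique2 by blast
  moreover have "F 0 = a 0" using Fe[of 0] sm0 sums_unique2 by blast
  ultimately show ?thesis by blast
qed

lemma minus_ext_scalar:
  fixes a :: "int \<Rightarrow> complex"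
  assumes hs: "\<And>z. z \<noteq> 0 \<Longrightarrow> ((\<lambda>k. z powi k * a k) has_sum f z) UNIV"
    and pos: "\<And>k. k > 0 \<Longrightarrow> a k = 0"
  shows "\<exists>F. F holomorphic_on UNIV \<and> (\<forall>z. z \<noteq> 0 \<longrightarrow> f z = F (inverse z)) \<and> F 0 = a 0"
proof -
  have hs': "((\<lambda>k. w powi k * a (- k)) has_sum f (inverse w)) UNIV" if "w \<noteq> 0" for w
  proof -
    have "((\<lambda>k. (inverse w) powi k * a k) has_sum f (inverse w)) (uminus ` UNIV)"
      using hs[of "inverse w"] that by simp
    then have "(((\<lambda>k. (inverse w) powi k * a k) \<circ> uminus) has_sum f (inverse w)) UNIV"
      by (subst (asm) has_sum_reindex) auto
    then show ?thesis by (simp add: o_def power_int_minus power_int_inverse)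
  qed
  obtain F where F: "F holomorphic_on UNIV" "\<forall>z. z \<noteq> 0 \<longrightarrow> F z = f (inverse z)" "F 0 = a 0"
    using plus_ext_scalar[of "\<lambda>k. a (- k)" "\<lambda>w. f (inverse w)", OF hs'] pos by auto
  then show ?thesis by (metis inverse_inverse_eq inverse_nonzero_iff_nonzero)
qed


subsection \<open>Matrix valued entire functions\<close>

definition hol :: "(complex \<Rightarrow> cmat) \<Rightarrow> bool" where
  "hol G \<longleftrightarrow> (\<forall>i j. (\<lambda>z. G z $ i $ j) holomorphic_on UNIV)"

definition bnd :: "(complex \<Rightarrow> cmat) \<Rightarrow> complex set \<Rightarrow> bool" where
  "bnd G S \<longleftrightarrow> (\<forall>i j. \<exists>B. \<forall>z\<in>S. norm (G z $ i $ j) \<le> B)"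

lemma hol_mult: "hol F \<Longrightarrow> hol G \<Longrightarrow> hol (\<lambda>z. F z ** G z)"
  unfolding hol_def mm_entry by (auto intro!: holomorphic_intros)

lemma hol_const: "hol (\<lambda>z. A)"
  unfolding hol_def by auto

lemma hol_adj2: "hol F \<Longrightarrow> hol (\<lambda>z. adj2 (F z))"
  unfolding hol_def adj2_def forall_2 mat2_entries by (auto intro!: holomorphic_intros)

lemma hol_det: "hol F \<Longrightarrow> (\<lambda>z. det (F z)) holomorphic_on UNIV"
  unfolding hol_def det_2 by (auto intro!: holomorphic_intros)

lemma bnd_mult: "bnd F S \<Longrightarrow> bnd G S \<Longrightarrow> bnd (\<lambda>z. F z ** G z) S"
  unfolding bnd_def
proof (intro allI)
  fix i j
  assume F: "\<forall>i j. \<exists>B. \<forall>z\<in>S. cmod (F z $ i $ j) \<le> B" and G: "\<forall>i j. \<exists>B. \<forall>z\<in>S. cmod (G z $ i $ j) \<le> B"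
  obtain B1 where B1: "\<forall>z\<in>S. cmod (F z $ i $ 1) \<le> B1" using F by blast
  obtain B2 where B2: "\<forall>z\<in>S. cmod (F z $ i $ 2) \<le> B2" using F by blast
  obtain C1 where C1: "\<forall>z\<in>S. cmod (G z $ 1 $ j) \<le> C1" using G by blast
  obtain C2 where C2: "\<forall>z\<in>S. cmod (G z $ 2 $ j) \<le> C2" using G by blast
  have "cmod ((F z ** G z) $ i $ j) \<le> B1 * C1 + B2 * C2" if z: "z \<in> S" for z
  proof -
    have "cmod ((F z ** G z) $ i $ j) \<le> cmod (F z $ i $ 1) * cmod (G z $ 1 $ j) + cmod (F z $ i $ 2) * cmod (G z $ 2 $ j)"
      using norm_triangle_ineq[of "F z $ i $ 1 * G z $ 1 $ j" "F z $ i $ 2 * G z $ 2 $ j"]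
      by (simp add: mm_entry norm_mult)
    also have "\<dots> \<le> B1 * C1 + B2 * C2"
    proof (rule add_mono)
      show "cmod (F z $ i $ 1) * cmod (G z $ 1 $ j) \<le> B1 * C1"
        by (rule mult_mono) (simp_all add: B1[rule_format, OF z] C1[rule_format, OF z] order_trans[OF norm_ge_zero B1[rule_format, OF z]])
      show "cmod (F z $ i $ 2) * cmod (G z $ 2 $ j) \<le> B2 * C2"
        by (rule mult_mono) (simp_all add: B2[rule_format, OF z] C2[rule_format, OF z] order_trans[OF norm_ge_zero B2[rule_format, OF z]])
    qed
    finally show ?thesis .
  qed
  then show "\<exists>B. \<forall>z\<in>S. cmod ((F z ** G z) $ i $ j) \<le> B" by blast
qed

lemma bnd_const: "bnd (\<lambda>z. A) S"
  unfolding bnd_def by blast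

lemma bnd_adj2: assumes "bnd F S" shows "bnd (\<lambda>z. adj2 (F z)) S"
proof -
  have e: "\<And>a b. \<exists>B. \<forall>z\<in>S. cmod (F z $ a $ b) \<le> B" using assms unfolding bnd_def by blast
  show ?thesis unfolding bnd_def adj2_def forall_2 mat2_entries norm_minus_cancel
    using e by blast
qed

lemma bnd_cong: "bnd F S \<Longrightarrow> (\<And>z. z \<in> S \<Longrightarrow> G z = F z) \<Longrightarrow> bnd G S"
  unfolding bnd_def by auto

lemma bnd_hol_cball: "hol H \<Longrightarrow> bnd H (cball 0 1)"
  unfolding bnd_def hol_def
proof (intro allI)
  fix i j assume "\<forall>i j. (\<lambda>z. H z $ i $ j) holomorphic_on UNIV"
  then have "continuous_on (cball 0 1) (\<lambda>z. H z $ i $ j)"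
    by (meson holomorphic_on_imp_continuous_on holomorphic_on_subset subset_UNIV)
  then have "bounded ((\<lambda>z. H z $ i $ j) ` cball 0 1)"
    by (intro compact_imp_bounded compact_continuous_image) auto
  then show "\<exists>B. \<forall>z\<in>cball 0 1. cmod (H z $ i $ j) \<le> B"
    unfolding bounded_iff by auto
qed

lemma choice2: "(\<And>i j. \<exists>F. P i j F) \<Longrightarrow> \<exists>F. \<forall>i j. P i j (F i j)"
  by metis

lemma entry_has_sum:
  assumes "laurent_coeffs g c" "z \<noteq> 0"
  shows "((\<lambda>k. z powi k * c k $ i $ j) has_sum g z $ i $ j) UNIV"
proof -
  have h: "((\<lambda>k. cscale (z powi k) (c k)) has_sum g z) UNIV"
    using assms unfolding laurent_coeffs_def by blast
  have bl: "bounded_linear (\<lambda>M::cmat. M $ i $ j)"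
    by (rule bounded_linear_compose[OF bounded_linear_vec_nth bounded_linear_vec_nth])
  show ?thesis using has_sum_bounded_linear[OF bl h] by (simp add: cscale_def)
qed

lemma plus_ext:
  assumes "laurent_coeffs g c" "\<And>k. k < 0 \<Longrightarrow> c k = 0"
  shows "\<exists>G. hol G \<and> (\<forall>z. z \<noteq> 0 \<longrightarrow> G z = g z) \<and> G 0 = c 0"
proof -
  have "\<exists>F. F holomorphic_on UNIV \<and> (\<forall>z. z \<noteq> 0 \<longrightarrow> F z = g z $ i $ j) \<and> F 0 = c 0 $ i $ j" for i j
    by (rule plus_ext_scalar) (use entry_has_sum[OF assms(1)] assms(2) in auto)
  then obtain F where F: "\<forall>i j. F i j holomorphic_on UNIV \<and> (\<forall>z. z \<noteq> 0 \<longrightarrow> F i j z = g z $ i $ j) \<and> F i j 0 = c 0 $ i $ j"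
    using choice2[where P="\<lambda>i j F. F holomorphic_on UNIV \<and> (\<forall>z. z \<noteq> 0 \<longrightarrow> F z = g z $ i $ j) \<and> F 0 = c 0 $ i $ j"] by blast
  define G where "G z = (\<chi> i j. F i j z)" for z
  have "hol G" unfolding hol_def G_def using F by simp
  moreover have "\<forall>z. z \<noteq> 0 \<longrightarrow> G z = g z" unfolding G_def using F by (simp add: vec_eq_iff)
  moreover have "G 0 = c 0" unfolding G_def using F by (simp add: vec_eq_iff)
  ultimately show ?thesis by blast
qed

lemma minus_ext:
  assumes "laurent_coeffs g c" "\<And>k. k > 0 \<Longrightarrow> c k = 0"
  shows "\<exists>G. hol G \<and> (\<forall>z. z \<noteq> 0 \<longrightarrow> g z = G (inverse z)) \<and> G 0 = c 0"
proof -
  have "\<exists>F. F holomorphic_on UNIV \<and> (\<forall>z. z \<noteq> 0 \<longrightarrow> g z $ i $ j = F (inverse z)) \<and> F 0 = c 0 $ i $ j" for i j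
    by (rule minus_ext_scalar) (use entry_has_sum[OF assms(1)] assms(2) in auto)
  then obtain F where F: "\<forall>i j. F i j holomorphic_on UNIV \<and> (\<forall>z. z \<noteq> 0 \<longrightarrow> g z $ i $ j = F i j (inverse z)) \<and> F i j 0 = c 0 $ i $ j"
    using choice2[where P="\<lambda>i j F. F holomorphic_on UNIV \<and> (\<forall>z. z \<noteq> 0 \<longrightarrow> g z $ i $ j = F (inverse z)) \<and> F 0 = c 0 $ i $ j"] by blast
  define G where "G z = (\<chi> i j. F i j z)" for z
  have "hol G" unfolding hol_def G_def using F by simp
  moreover have "\<forall>z. z \<noteq> 0 \<longrightarrow> g z = G (inverse z)" unfolding G_def using F by (simp add: vec_eq_iff)
  moreover have "G 0 = c 0" unfolding G_def using F by (simp add: vec_eq_iff)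
  ultimately show ?thesis by blast
qed

lemma det1_ext:
  assumes "hol G" "\<And>t::real. t \<noteq> 0 \<Longrightarrow> det (G (of_real t)) = 1"
  shows "det (G z) = 1"
proof -
  have lp: "0 islimpt (complex_of_real ` {t. t \<noteq> 0})"
    unfolding islimpt_approachable
  proof (intro allI impI)
    fix e :: real assume "0 < e"
    then have m: "complex_of_real (e/2) \<in> complex_of_real ` {t. t \<noteq> 0}" by (intro imageI) simp
    show "\<exists>x'\<in>complex_of_real ` {t. t \<noteq> 0}. x' \<noteq> 0 \<and> dist x' 0 < e"
      by (rule bexI[OF _ m]) (use \<open>0 < e\<close> in auto)
  qed
  have "det (G z) - 1 = 0"
    by (rule analytic_continuation[of "\<lambda>z. det (G z) - 1" UNIV "complex_of_real ` {t. t \<noteq> 0}" 0])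
       (use assms lp in \<open>auto intro!: holomorphic_intros hol_det\<close>)
  then show ?thesis by simp
qed

lemma liouville_ext:
  assumes "f holomorphic_on UNIV" "\<And>z. 1 \<le> norm z \<Longrightarrow> norm (f z) \<le> B"
  shows "f z = f 0"
proof -
  have "continuous_on (cball 0 1) f"
    by (meson assms(1) holomorphic_on_imp_continuous_on holomorphic_on_subset subset_UNIV)
  then have "bounded (f ` cball 0 1)"
    by (intro compact_imp_bounded compact_continuous_image) auto
  then obtain B2 where B2: "\<forall>z\<in>cball 0 1. norm (f z) \<le> B2" unfolding bounded_iff by auto
  have "norm (f w) \<le> max B B2" for w
  proof (cases "1 \<le> norm w")
    case True then show ?thesis using assms(2)[of w] by auto
  next
    case False
    then have "w \<in> cball 0 1" by simp
    then have "norm (f w) \<le> B2" using B2 by blast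
    then show ?thesis by linarith
  qed
  then have "bounded (range f)" unfolding bounded_iff by blast
  then have "f constant_on UNIV" using Liouville_theorem assms(1) by blast
  then show ?thesis unfolding constant_on_def by auto
qed


lemma birk_unique:
  assumes hP: "hol P" and hQ: "hol Q" and P0: "P 0 = mat 1" and Q0: "Q 0 = mat 1"
    and dQ: "\<And>z. det (Q z) = 1" and dM: "\<And>z. z \<noteq> 0 \<Longrightarrow> det (M z) = 1"
    and bM: "bnd M {z. 1 \<le> norm z}" and bN: "bnd N {z. 1 \<le> norm z}"
    and eq: "\<And>z. z \<noteq> 0 \<Longrightarrow> P z ** M z = Q z ** N z"
  shows "P z = Q z"
proof -
  define F where "F z = adj2 (Q z) ** P z" for z
  have hF: "hol F" unfolding F_def by (intro hol_mult hol_adj2 hQ hP)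
  have Fe: "F z = N z ** adj2 (M z)" if "z \<noteq> 0" for z
  proof -
    have "F z = adj2 (Q z) ** P z ** (M z ** adj2 (M z))" using adj2_right[OF dM[OF that]] by (simp add: F_def)
    also have "\<dots> = adj2 (Q z) ** (P z ** M z) ** adj2 (M z)" by (simp add: matrix_mul_assoc)
    also have "\<dots> = adj2 (Q z) ** Q z ** N z ** adj2 (M z)" using eq[OF that] by (simp add: matrix_mul_assoc)
    also have "\<dots> = N z ** adj2 (M z)" using adj2_left[OF dQ] by simp
    finally show ?thesis .
  qed
  have bF: "bnd F {z. 1 \<le> norm z}"
  proof (rule bnd_cong[OF bnd_mult[OF bN bnd_adj2[OF bM]]])
    fix z :: complex assume "z \<in> {z. 1 \<le> norm z}"
    then have "z \<noteq> 0" by auto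
    then show "F z = N z ** adj2 (M z)" by (rule Fe)
  qed
  have F0: "F 0 = mat 1" using adj2_left[OF dQ[of 0]] P0 Q0 by (simp add: F_def)
  have Fc: "F w = mat 1" for w
  proof -
    have "F w $ i $ j = F 0 $ i $ j" for i j
    proof -
      obtain B where B: "\<forall>z\<in>{z. 1 \<le> norm z}. norm (F z $ i $ j) \<le> B" using bF unfolding bnd_def by blast
      have "(\<lambda>z. F z $ i $ j) holomorphic_on UNIV" using hF unfolding hol_def by blast
      then show ?thesis using liouville_ext[of "\<lambda>z. F z $ i $ j" B w] B by auto
    qed
    then show ?thesis using F0 by (simp add: vec_eq_iff)
  qed
  have "P z = Q z ** adj2 (Q z) ** P z" using adj2_right[OF dQ] by simp
  also have "\<dots> = Q z ** F z" by (simp add: F_def matrix_mul_assoc)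
  also have "\<dots> = Q z" using Fc by simp
  finally show ?thesis .
qed

lemma det_loop: "twisted_loop g \<Longrightarrow> t \<noteq> 0 \<Longrightarrow> det (g (of_real t)) = 1"
  unfolding twisted_loop_def SU2_def by auto

lemma bnd_inv:
  assumes "bnd H (cball 0 1)" "\<And>z. 1 \<le> norm z \<Longrightarrow> g z = H (inverse z)"
  shows "bnd g {z. 1 \<le> norm z}"
  unfolding bnd_def
proof (intro allI)
  fix i j
  obtain B where B: "\<forall>z\<in>cball 0 1. norm (H z $ i $ j) \<le> B" using assms(1) unfolding bnd_def by blast
  have "norm (g z $ i $ j) \<le> B" if "z \<in> {z. 1 \<le> norm z}" for z
  proof -
    have n: "1 \<le> norm z" using that by simp
    then have "norm (inverse z) \<le> 1" by (simp add: norm_inverse inverse_le_1_iff)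
    then have "inverse z \<in> cball 0 1" by simp
    then show ?thesis using B assms(2)[OF n] by simp
  qed
  then show "\<exists>B. \<forall>z\<in>{z. 1 \<le> norm z}. norm (g z $ i $ j) \<le> B" by blast
qed

lemma plus_star_data:
  assumes "loop_plus_star g"
  shows "\<exists>G. hol G \<and> (\<forall>z. z \<noteq> 0 \<longrightarrow> G z = g z) \<and> G 0 = mat 1 \<and> (\<forall>z. det (G z) = 1)"
proof -
  obtain c where c: "laurent_coeffs g c" "\<forall>k<0. c k = 0" "c 0 = mat 1" and tw: "twisted_loop g"
    using assms unfolding loop_plus_star_def by blast
  obtain G where G: "hol G" "\<forall>z. z \<noteq> 0 \<longrightarrow> G z = g z" "G 0 = c 0"
    using plus_ext[OF c(1)] c(2) by blast
  have "det (G z) = 1" for z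
    by (rule det1_ext[OF G(1)]) (use G(2) det_loop[OF tw] in simp)
  then show ?thesis using G c(3) by auto
qed

lemma minus_star_data:
  assumes "loop_minus_star g"
  shows "\<exists>H. hol H \<and> (\<forall>z. z \<noteq> 0 \<longrightarrow> g z = H (inverse z)) \<and> H 0 = mat 1 \<and> (\<forall>z. det (H z) = 1)"
proof -
  obtain c where c: "laurent_coeffs g c" "\<forall>k>0. c k = 0" "c 0 = mat 1" and tw: "twisted_loop g"
    using assms unfolding loop_minus_star_def by blast
  obtain H where H: "hol H" "\<forall>z. z \<noteq> 0 \<longrightarrow> g z = H (inverse z)" "H 0 = c 0"
    using minus_ext[OF c(1)] c(2) by blast
  have "det (H z) = 1" for z
  proof (rule det1_ext[OF H(1)])
    fix t :: real assume t: "t \<noteq> 0"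
    have "H (of_real t) = g (inverse (of_real t))" using H(2)[rule_format, of "inverse (of_real t)"] t by simp
    also have "\<dots> = g (of_real (inverse t))" by (simp add: of_real_inverse)
    finally show "det (H (of_real t)) = 1" using det_loop[OF tw, of "inverse t"] t by simp
  qed
  then show ?thesis using H c(3) by auto
qed

lemma minus_data:
  assumes "loop_minus g"
  shows "bnd g {z. 1 \<le> norm z} \<and> (\<forall>z. z \<noteq> 0 \<longrightarrow> det (g z) = 1)"
proof -
  obtain c where c: "laurent_coeffs g c" "\<forall>k>0. c k = 0" and tw: "twisted_loop g"
    using assms unfolding loop_minus_def by blast
  obtain H where H: "hol H" "\<forall>z. z \<noteq> 0 \<longrightarrow> g z = H (inverse z)"
    using minus_ext[OF c(1)] c(2) by blast
  have dH: "det (H z) = 1" for z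
  proof (rule det1_ext[OF H(1)])
    fix t :: real assume t: "t \<noteq> 0"
    have "H (of_real t) = g (inverse (of_real t))" using H(2)[rule_format, of "inverse (of_real t)"] t by simp
    also have "\<dots> = g (of_real (inverse t))" by (simp add: of_real_inverse)
    finally show "det (H (of_real t)) = 1" using det_loop[OF tw, of "inverse t"] t by simp
  qed
  have "bnd g {z. 1 \<le> norm z}"
  proof (rule bnd_inv[OF bnd_hol_cball[OF H(1)]])
    fix z :: complex assume "1 \<le> norm z"
    then have "z \<noteq> 0" by auto
    then show "g z = H (inverse z)" using H(2) by blast
  qed
  moreover have "\<forall>z. z \<noteq> 0 \<longrightarrow> det (g z) = 1" using H(2) dH by simp
  ultimately show ?thesis by blast
qed

lemma plus_data:
  assumes "loop_plus g"
  shows "bnd (\<lambda>w. g (inverse w)) {z. 1 \<le> norm z} \<and> (\<forall>z. z \<noteq> 0 \<longrightarrow> det (g z) = 1)"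
proof -
  obtain c where c: "laurent_coeffs g c" "\<forall>k<0. c k = 0" and tw: "twisted_loop g"
    using assms unfolding loop_plus_def by blast
  obtain G where G: "hol G" "\<forall>z. z \<noteq> 0 \<longrightarrow> G z = g z"
    using plus_ext[OF c(1)] c(2) by blast
  have dG: "det (G z) = 1" for z
    by (rule det1_ext[OF G(1)]) (use G(2) det_loop[OF tw] in simp)
  have "bnd (\<lambda>w. g (inverse w)) {z. 1 \<le> norm z}"
  proof (rule bnd_inv[OF bnd_hol_cball[OF G(1)]])
    fix z :: complex assume "1 \<le> norm z"
    then have "inverse z \<noteq> 0" by auto
    then show "g (inverse z) = G (inverse z)" using G(2) by metis
  qed
  moreover have "\<forall>z. z \<noteq> 0 \<longrightarrow> det (g z) = 1" using G(2) dG by metis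
  ultimately show ?thesis by blast
qed


lemma bl_conj: "bounded_linear (\<lambda>M::cmat. (A::cmat) ** M ** (B::cmat))"
proof -
  have "linear (\<lambda>M::cmat. A ** M ** B)"
  proof (rule linearI)
    fix M N :: cmat and r :: real
    show "A ** (M + N) ** B = A ** M ** B + A ** N ** B"
      unfolding cmat_eq_iff by (simp add: mm_entry algebra_simps)
    show "A ** (r *\<^sub>R M) ** B = r *\<^sub>R (A ** M ** B)"
      unfolding cmat_eq_iff by (simp add: mm_entry vector_scaleR_component algebra_simps)
  qed
  then show ?thesis by (simp add: linear_conv_bounded_linear)
qed

lemma deriv_conj:
  assumes Om: "open \<Omega>" and p: "(x,y) \<in> \<Omega>" and sm: "smooth2_on \<Omega> (\<lambda>p. f (fst p) (snd p) lam)"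
    and eq: "\<And>a b. (a,b) \<in> \<Omega> \<Longrightarrow> g a b lam = A ** f a b lam ** B"
  shows "partial_x g x y lam = A ** partial_x f x y lam ** B \<and> partial_y g x y lam = A ** partial_y f x y lam ** B"
proof -
  obtain Fam where F1: "(\<lambda>p. f (fst p) (snd p) lam) \<in> Fam" and F2: "\<forall>g\<in>Fam. \<exists>gx\<in>Fam. \<exists>gy\<in>Fam. \<forall>p\<in>\<Omega>.
      (g has_derivative (\<lambda>h. fst h *\<^sub>R gx p + snd h *\<^sub>R gy p)) (at p within \<Omega>)"
    using sm unfolding smooth2_on_def by blast
  obtain gx gy where G: "\<forall>p\<in>\<Omega>. ((\<lambda>p. f (fst p) (snd p) lam) has_derivative (\<lambda>h. fst h *\<^sub>R gx p + snd h *\<^sub>R gy p)) (at p within \<Omega>)"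
    using F2 F1 by blast
  define dx where "dx = gx (x,y)"
  define dy where "dy = gy (x,y)"
  have d: "((\<lambda>p. f (fst p) (snd p) lam) has_derivative (\<lambda>h. fst h *\<^sub>R dx + snd h *\<^sub>R dy)) (at (x,y))"
  proof -
    have "((\<lambda>p. f (fst p) (snd p) lam) has_derivative (\<lambda>h. fst h *\<^sub>R dx + snd h *\<^sub>R dy)) (at (x,y) within \<Omega>)"
      using G p unfolding dx_def dy_def by blast
    then show ?thesis using at_within_open[OF p Om] by simp
  qed
  have hx: "((\<lambda>s. f s y lam) has_vector_derivative dx) (at x)"
  proof -
    have c: "((\<lambda>s. (s, y)) has_derivative (\<lambda>h. (h, 0))) (at x)"
      by (intro has_derivative_Pair has_derivative_ident has_derivative_const)
    have "(((\<lambda>p. f (fst p) (snd p) lam) \<circ> (\<lambda>s. (s, y))) has_derivative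
        ((\<lambda>h. fst h *\<^sub>R dx + snd h *\<^sub>R dy) \<circ> (\<lambda>h. (h, 0)))) (at x)"
      by (rule diff_chain_at[OF c]) (use d in simp)
    moreover have "((\<lambda>h. fst h *\<^sub>R dx + snd h *\<^sub>R dy) \<circ> (\<lambda>h. (h, 0))) = (\<lambda>h. h *\<^sub>R dx)"
      by (auto simp: o_def)
    ultimately show ?thesis unfolding has_vector_derivative_def by (simp add: o_def)
  qed
  have hy: "((\<lambda>t. f x t lam) has_vector_derivative dy) (at y)"
  proof -
    have c: "((\<lambda>t. (x, t)) has_derivative (\<lambda>h. (0, h))) (at y)"
      by (intro has_derivative_Pair has_derivative_ident has_derivative_const)
    have "(((\<lambda>p. f (fst p) (snd p) lam) \<circ> (\<lambda>t. (x, t))) has_derivative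
        ((\<lambda>h. fst h *\<^sub>R dx + snd h *\<^sub>R dy) \<circ> (\<lambda>h. (0, h)))) (at y)"
      by (rule diff_chain_at[OF c]) (use d in simp)
    moreover have "((\<lambda>h. fst h *\<^sub>R dx + snd h *\<^sub>R dy) \<circ> (\<lambda>h. (0, h))) = (\<lambda>h. h *\<^sub>R dy)"
      by (auto simp: o_def)
    ultimately show ?thesis unfolding has_vector_derivative_def by (simp add: o_def)
  qed
  have gx1: "((\<lambda>s. A ** f s y lam ** B) has_vector_derivative (A ** dx ** B)) (at x)"
    using bounded_linear.has_vector_derivative[OF bl_conj hx] .
  have gy1: "((\<lambda>t. A ** f x t lam ** B) has_vector_derivative (A ** dy ** B)) (at y)"
    using bounded_linear.has_vector_derivative[OF bl_conj hy] .
  have oSx: "open ((\<lambda>s. (s, y)) -` \<Omega>)"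
    by (rule open_vimage[OF Om]) (intro continuous_intros)
  have oSy: "open ((\<lambda>t. (x, t)) -` \<Omega>)"
    by (rule open_vimage[OF Om]) (intro continuous_intros)
  have gx2: "((\<lambda>s. g s y lam) has_vector_derivative (A ** dx ** B)) (at x)"
  proof (rule has_vector_derivative_transform_within_open[OF gx1 oSx])
    show "x \<in> (\<lambda>s. (s, y)) -` \<Omega>" using p by simp
    fix s assume "s \<in> (\<lambda>s. (s, y)) -` \<Omega>"
    then have "(s, y) \<in> \<Omega>" by simp
    then show "A ** f s y lam ** B = g s y lam" using eq by simp
  qed
  have gy2: "((\<lambda>t. g x t lam) has_vector_derivative (A ** dy ** B)) (at y)"
  proof (rule has_vector_derivative_transform_within_open[OF gy1 oSy])
    show "y \<in> (\<lambda>t. (x, t)) -` \<Omega>" using p by simp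
    fix t assume "t \<in> (\<lambda>t. (x, t)) -` \<Omega>"
    then have "(x, t) \<in> \<Omega>" by simp
    then show "A ** f x t lam ** B = g x t lam" using eq by simp
  qed
  show ?thesis
    unfolding partial_x_def partial_y_def
    using vector_derivative_at[OF gx2] vector_derivative_at[OF gy2]
      vector_derivative_at[OF hx] vector_derivative_at[OF hy] by argo
qed


lemma rot_cancel: "X ** rot t ** rot (-t) = X" "X ** rot (-t) ** rot t = X"
  by (metis matrix_mul_assoc matrix_mul_rid rot_inv)+

lemma adj_cancel: "det (A::cmat) = 1 \<Longrightarrow> X ** A ** adj2 A = X"
  by (metis matrix_mul_assoc matrix_mul_rid adj2_right)

lemma conj_final:
  assumes "det (A::cmat) = 1"
  shows "cscale c (matrix_inv (rot (-t) ** A ** rot t) ** (rot (-t) ** D ** rot t))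
    = matrix_inv (rot t) ** cscale c (matrix_inv A ** D) ** rot t"
proof -
  have mi: "matrix_inv (rot (-t) ** A ** rot t) = rot (-t) ** adj2 A ** rot t"
  proof (rule matrix_inv_eq)
    have "rot (-t) ** A ** rot t ** (rot (-t) ** adj2 A ** rot t) = rot (-t) ** A ** rot t ** rot (-t) ** adj2 A ** rot t"
      by (simp add: matrix_mul_assoc)
    also have "\<dots> = rot (-t) ** rot t" by (simp add: rot_cancel adj_cancel[OF assms])
    finally show "rot (-t) ** A ** rot t ** (rot (-t) ** adj2 A ** rot t) = mat 1" by (simp add: rot_inv)
    have "rot (-t) ** adj2 A ** rot t ** (rot (-t) ** A ** rot t) = rot (-t) ** adj2 A ** rot t ** rot (-t) ** A ** rot t"
      by (simp add: matrix_mul_assoc)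
    also have "\<dots> = rot (-t) ** (adj2 A ** A) ** rot t" by (simp add: rot_cancel matrix_mul_assoc)
    also have "\<dots> = mat 1" by (simp add: adj2_left[OF assms] rot_inv)
    finally show "rot (-t) ** adj2 A ** rot t ** (rot (-t) ** A ** rot t) = mat 1" .
  qed
  have "cscale c (matrix_inv (rot (-t) ** A ** rot t) ** (rot (-t) ** D ** rot t))
      = cscale c (rot (-t) ** adj2 A ** rot t ** rot (-t) ** D ** rot t)"
    by (simp add: mi matrix_mul_assoc)
  also have "\<dots> = cscale c (rot (-t) ** ((adj2 A ** D) ** rot t))"
    by (simp add: rot_cancel matrix_mul_assoc)
  also have "\<dots> = rot (-t) ** (cscale c (adj2 A ** D) ** rot t)"
    by (metis cscale_mult_right cscale_mult_left)
  also have "\<dots> = matrix_inv (rot t) ** cscale c (matrix_inv A ** D) ** rot t"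
    by (simp add: matrix_inv_rot matrix_inv_det1[OF assms] matrix_mul_assoc)
  finally show ?thesis .
qed

theorem proposition3:
  fixes x0 y0 :: real
    and \<phi> \<phi>x \<phi>xy \<theta> :: "real \<times> real \<Rightarrow> real"
    and U Up Vm Um Vp Uhp Vhm Uhm Vhp :: "real \<Rightarrow> real \<Rightarrow> complex \<Rightarrow> cmat"
    and \<Omega> :: "(real \<times> real) set"
  defines "D \<equiv> {0..x0} \<times> {0..y0}"
  defines "Uh \<equiv> (\<lambda>x y lam. matrix_inv (rot (\<theta> (0,0))) ** U x y lam ** rot (\<theta> (x,y)))"
  assumes x0: "x0 > 0" and y0: "y0 > 0"
    and phi_smooth: "smooth2_on D \<phi>"
    and phi_x: "\<And>x y. (x,y) \<in> D \<Longrightarrow>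
        ((\<lambda>s. \<phi> (s, y)) has_real_derivative \<phi>x (x,y)) (at x within {0..x0})"
    and phi_xy: "\<And>x y. (x,y) \<in> D \<Longrightarrow>
        ((\<lambda>t. \<phi>x (x, t)) has_real_derivative \<phi>xy (x,y)) (at y within {0..y0})"
    and sine_Gordon: "\<And>p. p \<in> D \<Longrightarrow> \<phi>xy p = sin (\<phi> p)"
    and frame_x: "\<And>x y lam. (x,y) \<in> D \<Longrightarrow> lam \<noteq> 0 \<Longrightarrow>
        ((\<lambda>s. U s y lam) has_vector_derivative
           (U x y lam ** cscale (\<i> / 2) (mat2 (of_real (\<phi>x (x,y))) (- lam) (- lam) (- of_real (\<phi>x (x,y))))))
        (at x within {0..x0})"
    and frame_y: "\<And>x y lam. (x,y) \<in> D \<Longrightarrow> lam \<noteq> 0 \<Longrightarrow>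
        ((\<lambda>t. U x t lam) has_vector_derivative
           (U x y lam ** cscale (\<i> / 2 * inverse lam)
              (mat2 0 (exp (- \<i> * of_real (\<phi> (x,y)))) (exp (\<i> * of_real (\<phi> (x,y)))) 0)))
        (at y within {0..y0})"
    and frame_init: "\<And>lam. lam \<noteq> 0 \<Longrightarrow> U 0 0 lam = mat 1"
    and theta_smooth: "smooth2_on D \<theta>"
    and Omega_open: "open \<Omega>" and Omega_sub: "\<Omega> \<subseteq> D"
    and fact_loops: "\<And>x y. (x,y) \<in> \<Omega> \<Longrightarrow>
        loop_plus_star (Up x y) \<and> loop_minus (Vm x y) \<and>
        loop_minus_star (Um x y) \<and> loop_plus (Vp x y) \<and>
        loop_plus_star (Uhp x y) \<and> loop_minus (Vhm x y) \<and>
        loop_minus_star (Uhm x y) \<and> loop_plus (Vhp x y)"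
    and fact_eqs: "\<And>x y lam. (x,y) \<in> \<Omega> \<Longrightarrow> lam \<noteq> 0 \<Longrightarrow>
        U x y lam = Up x y lam ** Vm x y lam \<and> U x y lam = Um x y lam ** Vp x y lam \<and>
        Uh x y lam = Uhp x y lam ** Vhm x y lam \<and> Uh x y lam = Uhm x y lam ** Vhp x y lam"
    and fact_smooth: "\<And>lam. lam \<noteq> 0 \<Longrightarrow>
        smooth2_on \<Omega> (\<lambda>p. Up (fst p) (snd p) lam) \<and> smooth2_on \<Omega> (\<lambda>p. Vm (fst p) (snd p) lam) \<and>
        smooth2_on \<Omega> (\<lambda>p. Um (fst p) (snd p) lam) \<and> smooth2_on \<Omega> (\<lambda>p. Vp (fst p) (snd p) lam) \<and>
        smooth2_on \<Omega> (\<lambda>p. Uhp (fst p) (snd p) lam) \<and> smooth2_on \<Omega> (\<lambda>p. Vhm (fst p) (snd p) lam) \<and>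
        smooth2_on \<Omega> (\<lambda>p. Uhm (fst p) (snd p) lam) \<and> smooth2_on \<Omega> (\<lambda>p. Vhp (fst p) (snd p) lam)"
  shows "\<forall>x y lam. (x,y) \<in> \<Omega> \<and> lam \<noteq> 0 \<longrightarrow>
      cscale (- inverse lam) (matrix_inv (Uhp x y lam) ** partial_x Uhp x y lam)
        = matrix_inv (rot (\<theta> (0,0))) ** cscale (- inverse lam) (matrix_inv (Up x y lam) ** partial_x Up x y lam) ** rot (\<theta> (0,0))
    \<and> cscale (- lam) (matrix_inv (Uhm x y lam) ** partial_y Uhm x y lam)
        = matrix_inv (rot (\<theta> (0,0))) ** cscale (- lam) (matrix_inv (Um x y lam) ** partial_y Um x y lam) ** rot (\<theta> (0,0))"
proof (intro allI impI)
  fix x y :: real and lam :: complex assume xyl: "(x, y) \<in> \<Omega> \<and> lam \<noteq> 0"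
  then have p: "(x, y) \<in> \<Omega>" and lam0: "lam \<noteq> 0" by auto
  define t where "t = \<theta> (0,0)"
  have conj: "Uhp a b z = rot (-t) ** Up a b z ** rot t \<and> Uhm a b z = rot (-t) ** Um a b z ** rot t"
    if ab: "(a,b) \<in> \<Omega>" and z: "z \<noteq> 0" for a b z
  proof -
    define Ra where "Ra = rot (\<theta> (a,b))"
    have L: "loop_plus_star (Up a b)" "loop_minus (Vm a b)" "loop_minus_star (Um a b)" "loop_plus (Vp a b)"
      "loop_plus_star (Uhp a b)" "loop_minus (Vhm a b)" "loop_minus_star (Uhm a b)" "loop_plus (Vhp a b)"
      using fact_loops[OF ab] by auto
    have E: "rot (-t) ** (Up a b w ** Vm a b w) ** Ra = Uhp a b w ** Vhm a b w"
      "rot (-t) ** (Um a b w ** Vp a b w) ** Ra = Uhm a b w ** Vhp a b w" if "w \<noteq> 0" for w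
      using fact_eqs[OF ab that] unfolding Uh_def Ra_def t_def matrix_inv_rot by metis+
    obtain GUp where GUp: "hol GUp" "\<forall>z. z \<noteq> 0 \<longrightarrow> GUp z = Up a b z" "GUp 0 = mat 1" "\<forall>z. det (GUp z) = 1"
      using plus_star_data[OF L(1)] by blast
    obtain GUhp where GUhp: "hol GUhp" "\<forall>z. z \<noteq> 0 \<longrightarrow> GUhp z = Uhp a b z" "GUhp 0 = mat 1" "\<forall>z. det (GUhp z) = 1"
      using plus_star_data[OF L(5)] by blast
    obtain HUm where HUm: "hol HUm" "\<forall>z. z \<noteq> 0 \<longrightarrow> Um a b z = HUm (inverse z)" "HUm 0 = mat 1" "\<forall>z. det (HUm z) = 1"
      using minus_star_data[OF L(3)] by blast
    obtain HUhm where HUhm: "hol HUhm" "\<forall>z. z \<noteq> 0 \<longrightarrow> Uhm a b z = HUhm (inverse z)" "HUhm 0 = mat 1" "\<forall>z. det (HUhm z) = 1"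
      using minus_star_data[OF L(7)] by blast
    have Vm: "bnd (Vm a b) {z. 1 \<le> norm z}" "\<forall>z. z \<noteq> 0 \<longrightarrow> det (Vm a b z) = 1"
      using minus_data[OF L(2)] by auto
    have Vhm: "bnd (Vhm a b) {z. 1 \<le> norm z}"
      using minus_data[OF L(6)] by auto
    have Vp: "bnd (\<lambda>w. Vp a b (inverse w)) {z. 1 \<le> norm z}" "\<forall>z. z \<noteq> 0 \<longrightarrow> det (Vp a b z) = 1"
      using plus_data[OF L(4)] by auto
    have Vhp: "bnd (\<lambda>w. Vhp a b (inverse w)) {z. 1 \<le> norm z}"
      using plus_data[OF L(8)] by auto
    have dRa: "det Ra = 1" "det (rot (-t)) = 1" by (simp_all add: Ra_def det_rot)
    have X: "rot (-t) ** GUp w ** rot t = GUhp w" for w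
    proof (rule birk_unique[where M="\<lambda>w. rot (-t) ** Vm a b w ** Ra" and N="Vhm a b"])
      show "hol (\<lambda>w. rot (- t) ** GUp w ** rot t)" by (intro hol_mult hol_const GUp(1))
      show "hol GUhp" by (rule GUhp(1))
      show "rot (- t) ** GUp 0 ** rot t = mat 1" by (simp add: GUp(3) rot_inv)
      show "GUhp 0 = mat 1" by (rule GUhp(3))
      show "\<And>z. det (GUhp z) = 1" using GUhp(4) by blast
      show "\<And>z. z \<noteq> 0 \<Longrightarrow> det (rot (- t) ** Vm a b z ** Ra) = 1"
        using Vm(2) dRa by (simp add: det_mul)
      show "bnd (\<lambda>w. rot (- t) ** Vm a b w ** Ra) {z. 1 \<le> cmod z}"
        by (intro bnd_mult bnd_const Vm(1))
      show "bnd (Vhm a b) {z. 1 \<le> cmod z}" by (rule Vhm)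
      fix z :: complex assume z: "z \<noteq> 0"
      have "rot (- t) ** GUp z ** rot t ** (rot (- t) ** Vm a b z ** Ra)
          = rot (- t) ** (Up a b z ** Vm a b z) ** Ra"
        using GUp(2) z by (simp add: matrix_mul_assoc rot_cancel)
      also have "\<dots> = GUhp z ** Vhm a b z" using E(1)[OF z] GUhp(2) z by simp
      finally show "rot (- t) ** GUp z ** rot t ** (rot (- t) ** Vm a b z ** Ra) = GUhp z ** Vhm a b z" .
    qed
    have Y: "rot (-t) ** HUm w ** rot t = HUhm w" for w
    proof (rule birk_unique[where M="\<lambda>w. rot (-t) ** Vp a b (inverse w) ** Ra" and N="\<lambda>w. Vhp a b (inverse w)"])
      show "hol (\<lambda>w. rot (- t) ** HUm w ** rot t)" by (intro hol_mult hol_const HUm(1))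
      show "hol HUhm" by (rule HUhm(1))
      show "rot (- t) ** HUm 0 ** rot t = mat 1" by (simp add: HUm(3) rot_inv)
      show "HUhm 0 = mat 1" by (rule HUhm(3))
      show "\<And>z. det (HUhm z) = 1" using HUhm(4) by blast
      show "\<And>z. z \<noteq> 0 \<Longrightarrow> det (rot (- t) ** Vp a b (inverse z) ** Ra) = 1"
        using Vp(2) dRa by (simp add: det_mul)
      show "bnd (\<lambda>w. rot (- t) ** Vp a b (inverse w) ** Ra) {z. 1 \<le> cmod z}"
        by (intro bnd_mult bnd_const Vp(1))
      show "bnd (\<lambda>w. Vhp a b (inverse w)) {z. 1 \<le> cmod z}" by (rule Vhp)
      fix z :: complex assume z: "z \<noteq> 0"
      then have iz: "inverse z \<noteq> 0" by simp
      have "rot (- t) ** HUm z ** rot t ** (rot (- t) ** Vp a b (inverse z) ** Ra)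
          = rot (- t) ** (Um a b (inverse z) ** Vp a b (inverse z)) ** Ra"
        using HUm(2) iz by (simp add: matrix_mul_assoc rot_cancel)
      also have "\<dots> = HUhm z ** Vhp a b (inverse z)" using E(2)[OF iz] HUhm(2) iz by simp
      finally show "rot (- t) ** HUm z ** rot t ** (rot (- t) ** Vp a b (inverse z) ** Ra) = HUhm z ** Vhp a b (inverse z)" .
    qed
    have "Uhp a b z = rot (-t) ** Up a b z ** rot t" using X[of z] GUp(2) GUhp(2) z by simp
    moreover have "Uhm a b z = rot (-t) ** Um a b z ** rot t"
      using Y[of "inverse z"] HUm(2) HUhm(2) z by simp
    ultimately show ?thesis by blast
  qed
  have sm: "smooth2_on \<Omega> (\<lambda>p. Up (fst p) (snd p) lam)" "smooth2_on \<Omega> (\<lambda>p. Um (fst p) (snd p) lam)"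
    using fact_smooth[OF lam0] by auto
  have dx: "partial_x Uhp x y lam = rot (-t) ** partial_x Up x y lam ** rot t"
  proof -
    have "\<And>a b. (a, b) \<in> \<Omega> \<Longrightarrow> Uhp a b lam = rot (-t) ** Up a b lam ** rot t"
      using conj lam0 by blast
    from deriv_conj[where f=Up and g=Uhp and A="rot (-t)" and B="rot t", OF Omega_open p sm(1) this]
    show ?thesis by blast
  qed
  have dy: "partial_y Uhm x y lam = rot (-t) ** partial_y Um x y lam ** rot t"
  proof -
    have "\<And>a b. (a, b) \<in> \<Omega> \<Longrightarrow> Uhm a b lam = rot (-t) ** Um a b lam ** rot t"
      using conj lam0 by blast
    from deriv_conj[where f=Um and g=Uhm and A="rot (-t)" and B="rot t", OF Omega_open p sm(2) this]
    show ?thesis by blast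
  qed
  have L: "loop_plus_star (Up x y)" "loop_minus_star (Um x y)" using fact_loops[OF p] by auto
  have detUp: "det (Up x y lam) = 1"
  proof -
    obtain G where "\<forall>z. z \<noteq> 0 \<longrightarrow> G z = Up x y z" "\<forall>z. det (G z) = 1"
      using plus_star_data[OF L(1)] by blast
    then show ?thesis using lam0 by metis
  qed
  have detUm: "det (Um x y lam) = 1"
  proof -
    obtain H where "\<forall>z. z \<noteq> 0 \<longrightarrow> Um x y z = H (inverse z)" "\<forall>z. det (H z) = 1"
      using minus_star_data[OF L(2)] by blast
    then show ?thesis using lam0 by metis
  qed
  show "cscale (- inverse lam) (matrix_inv (Uhp x y lam) ** partial_x Uhp x y lam)
        = matrix_inv (rot (\<theta> (0,0))) ** cscale (- inverse lam) (matrix_inv (Up x y lam) ** partial_x Up x y lam) ** rot (\<theta> (0,0))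
    \<and> cscale (- lam) (matrix_inv (Uhm x y lam) ** partial_y Uhm x y lam)
        = matrix_inv (rot (\<theta> (0,0))) ** cscale (- lam) (matrix_inv (Um x y lam) ** partial_y Um x y lam) ** rot (\<theta> (0,0))"
    unfolding t_def[symmetric] dx dy
    using conj[OF p lam0] conj_final[OF detUp] conj_final[OF detUm] by simp
qed

end
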